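(* On $S^{2n+1}\subset{\mathbb C}^{n+1}$ with coordinates $z_i=x_i+\sqrt{-1}y_i$, let $w=(w_0,\dots,w_n)$ with all $w_i>0$ chosen generically so that the only closed orbits of the Reeb field $\xi_w=\sum_iw_i(x_i\partial_{y_i}-y_i\partial_{x_i})$ are $L_i=\{|z_i|=1\}$, and let $g_w$ be the metric of the deformed Sasakian structure with contact form $\eta_w=\eta/\sum_iw_i(x_i^2+y_i^2)$, $\eta=\sum_i(x_idy_i-y_idx_i)$. Then for any $\beta=(\beta_0,\dots,\beta_n)$ for which the denominators are nonzero, $$\mathrm{Vol}(S^{2n+1},g_w)=\frac{2\pi^{n+1}}{n!}\sum_{i=0}^n\frac{1}{w_i^{n+1}}\frac{\beta_i^n}{\prod_{j\ne i}\left(\frac{\beta_i}{w_i}w_j-\beta_j\right)}=\frac{2\pi^{n+1}}{n!}\cdot\frac{1}{w_0w_1\cdots w_n}.$$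
   Context: The deformed structure (deformation of type I of the standard Sasakian structure) has the same CR structure $(\ker\eta,J)$ as the standard one, Reeb field $\xi_w$, contact form $\eta_w$, and metric $g_w=\tfrac12 d\eta_w\circ(1\otimes J)+\eta_w\otimes\eta_w$. For $w=(1,\dots,1)$ this is the round unit sphere. *)

theory Defs
  imports "HOL-Analysis.Analysis"
begin

text \<open>Points and tangent vectors of C^(n+1) = R^(2n+2) are functions nat => real;
 real coordinate 2i is x_i and coordinate 2i+1 is y_i (i = 0..n).\<close>

definition xc :: "(nat \<Rightarrow> real) \<Rightarrow> nat \<Rightarrow> real" where
  "xc p i = p (2 * i)"
definition yc :: "(nat \<Rightarrow> real) \<Rightarrow> nat \<Rightarrow> real" where
  "yc p i = p (2 * i + 1)"
definition mkvec :: "(nat \<Rightarrow> real) \<Rightarrow> (nat \<Rightarrow> real) \<Rightarrow> nat \<Rightarrow> real" where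
  "mkvec a b k = (if even k then a (k div 2) else b (k div 2))"

definition rinner :: "nat \<Rightarrow> (nat \<Rightarrow> real) \<Rightarrow> (nat \<Rightarrow> real) \<Rightarrow> real" where
  "rinner n u v = (\<Sum>k<2*n+2. u k * v k)"

definition unit_sphere :: "nat \<Rightarrow> (nat \<Rightarrow> real) set" where
  "unit_sphere n = {p. rinner n p p = 1}"

definition fw :: "nat \<Rightarrow> (nat \<Rightarrow> real) \<Rightarrow> (nat \<Rightarrow> real) \<Rightarrow> real" where
  "fw n w p = (\<Sum>i\<le>n. w i * ((xc p i)\<^sup>2 + (yc p i)\<^sup>2))"

definition eta0 :: "nat \<Rightarrow> (nat \<Rightarrow> real) \<Rightarrow> (nat \<Rightarrow> real) \<Rightarrow> real" where
  "eta0 n p v = (\<Sum>i\<le>n. xc p i * yc v i - yc p i * xc v i)"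

definition deta0 :: "nat \<Rightarrow> (nat \<Rightarrow> real) \<Rightarrow> (nat \<Rightarrow> real) \<Rightarrow> real" where
  "deta0 n u v = 2 * (\<Sum>i\<le>n. xc u i * yc v i - yc u i * xc v i)"

definition dfw :: "nat \<Rightarrow> (nat \<Rightarrow> real) \<Rightarrow> (nat \<Rightarrow> real) \<Rightarrow> (nat \<Rightarrow> real) \<Rightarrow> real" where
  "dfw n w p v = (\<Sum>i\<le>n. 2 * w i * (xc p i * xc v i + yc p i * yc v i))"

definition eta_w :: "nat \<Rightarrow> (nat \<Rightarrow> real) \<Rightarrow> (nat \<Rightarrow> real) \<Rightarrow> (nat \<Rightarrow> real) \<Rightarrow> real" where
  "eta_w n w p v = eta0 n p v / fw n w p"

definition deta_w :: "nat \<Rightarrow> (nat \<Rightarrow> real) \<Rightarrow> (nat \<Rightarrow> real) \<Rightarrow> (nat \<Rightarrow> real) \<Rightarrow> (nat \<Rightarrow> real) \<Rightarrow> real" where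
  "deta_w n w p u v = deta0 n u v / fw n w p
     - (dfw n w p u * eta0 n p v - dfw n w p v * eta0 n p u) / (fw n w p)\<^sup>2"

definition reeb_w :: "nat \<Rightarrow> (nat \<Rightarrow> real) \<Rightarrow> (nat \<Rightarrow> real) \<Rightarrow> nat \<Rightarrow> real" where
  "reeb_w n w p = mkvec (\<lambda>i. - w i * yc p i) (\<lambda>i. w i * xc p i)"

definition Jst :: "(nat \<Rightarrow> real) \<Rightarrow> nat \<Rightarrow> real" where
  "Jst v = mkvec (\<lambda>i. - yc v i) (\<lambda>i. xc v i)"

text \<open>Phi_w: equal to J on ker eta, Phi_w xi_w = 0\<close>
definition Phi_w :: "nat \<Rightarrow> (nat \<Rightarrow> real) \<Rightarrow> (nat \<Rightarrow> real) \<Rightarrow> (nat \<Rightarrow> real) \<Rightarrow> nat \<Rightarrow> real" where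
  "Phi_w n w p v = Jst (\<lambda>k. v k - eta_w n w p v * reeb_w n w p k)"

definition g_w :: "nat \<Rightarrow> (nat \<Rightarrow> real) \<Rightarrow> (nat \<Rightarrow> real) \<Rightarrow> (nat \<Rightarrow> real) \<Rightarrow> (nat \<Rightarrow> real) \<Rightarrow> real" where
  "g_w n w p u v = 1/2 * deta_w n w p u (Phi_w n w p v) + eta_w n w p u * eta_w n w p v"

text \<open>Riemannian volume density of g_w w.r.t. the round surface measure:
 sqrt of the determinant of g_w|T_pS in a round-orthonormal frame, computed by extending
 g_w by the unit normal p (orthogonal projection onto T_pS plus the normal part).\<close>
definition tproj :: "nat \<Rightarrow> (nat \<Rightarrow> real) \<Rightarrow> (nat \<Rightarrow> real) \<Rightarrow> nat \<Rightarrow> real" where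
  "tproj n p u = (\<lambda>k. u k - rinner n u p * p k)"

definition ebasis :: "nat \<Rightarrow> nat \<Rightarrow> real" where
  "ebasis a = (\<lambda>k. if k = a then 1 else 0)"

definition det_nat :: "nat \<Rightarrow> (nat \<Rightarrow> nat \<Rightarrow> real) \<Rightarrow> real" where
  "det_nat N M = (\<Sum>q | q permutes {..<N}. of_int (sign q) * (\<Prod>k<N. M k (q k)))"

definition vol_density :: "nat \<Rightarrow> (nat \<Rightarrow> real) \<Rightarrow> (nat \<Rightarrow> real) \<Rightarrow> real" where
  "vol_density n w p = sqrt (det_nat (2*n+2) (\<lambda>a b.
      g_w n w p (tproj n p (ebasis a)) (tproj n p (ebasis b))
      + rinner n (ebasis a) p * rinner n (ebasis b) p))"

text \<open>Integral over the round unit sphere S^(2n+1) with respect to its surface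
 (= Riemannian) measure, via the cone construction: sigma(A) = (2n+2) * Lebesgue(cone over A).\<close>
definition sphere_integral :: "nat \<Rightarrow> ((nat \<Rightarrow> real) \<Rightarrow> real) \<Rightarrow> real" where
  "sphere_integral n h = real (2*n+2) *
     (\<integral>x. indicator {x. rinner n x x \<le> 1} x * h (\<lambda>k. x k / sqrt (rinner n x x))
        \<partial>(Pi\<^sub>M {..<2*n+2} (\<lambda>_. lborel)))"

definition deformed_volume :: "nat \<Rightarrow> (nat \<Rightarrow> real) \<Rightarrow> real" where
  "deformed_volume n w = sphere_integral n (vol_density n w)"

definition reeb_flow :: "nat \<Rightarrow> (nat \<Rightarrow> real) \<Rightarrow> real \<Rightarrow> (nat \<Rightarrow> real) \<Rightarrow> nat \<Rightarrow> real" where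
  "reeb_flow n w t p = mkvec
     (\<lambda>i. xc p i * cos (w i * t) - yc p i * sin (w i * t))
     (\<lambda>i. xc p i * sin (w i * t) + yc p i * cos (w i * t))"

definition closed_reeb_orbit :: "nat \<Rightarrow> (nat \<Rightarrow> real) \<Rightarrow> (nat \<Rightarrow> real) \<Rightarrow> bool" where
  "closed_reeb_orbit n w p \<longleftrightarrow> (\<exists>T>0. \<forall>k<2*n+2. reeb_flow n w T p k = p k)"

end

theory Submission
  imports Defs "Jordan_Normal_Form.Determinant" "HOL-Probability.Distributions" "HOL-Computational_Algebra.Polynomial"
begin


lemma lagrange_top:
  fixes u :: "nat \<Rightarrow> real"
  assumes dist: "\<And>i j. i \<le> n \<Longrightarrow> j \<le> n \<Longrightarrow> i \<noteq> j \<Longrightarrow> u i \<noteq> u j"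
  shows "(\<Sum>i\<le>n. u i ^ n / (\<Prod>j\<in>{..n}-{i}. u i - u j)) = 1"
proof -
  define L where "L i = (\<Prod>j\<in>{..n}-{i}. [:- u j, 1:])" for i
  define d where "d i = (\<Prod>j\<in>{..n}-{i}. u i - u j)" for i
  define Q where "Q = (\<Sum>i\<le>n. Polynomial.smult (u i ^ n / d i) (L i)) - monom 1 n"
  have dnz: "d i \<noteq> 0" if "i \<le> n" for i
    unfolding d_def using dist that by (auto simp: prod_zero_iff)
  have polyL: "poly (L i) x = (\<Prod>j\<in>{..n}-{i}. x - u j)" for i x
    unfolding L_def by (simp add: poly_prod)
  have degL: "degree (L i) = n" if "i \<le> n" for i
  proof -
    have "degree (L i) = (\<Sum>j\<in>{..n}-{i}. degree [:- u j, 1:])"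
      unfolding L_def by (rule degree_prod_sum_eq) auto
    also have "\<dots> = card ({..n}-{i})" by simp
    also have "\<dots> = n" using that by simp
    finally show ?thesis .
  qed
  have lcL: "lead_coeff (L i) = 1" for i
    unfolding L_def lead_coeff_prod by simp
  have roots: "poly Q (u k) = 0" if "k \<le> n" for k
  proof -
    have "poly Q (u k) = (\<Sum>i\<le>n. u i ^ n / d i * poly (L i) (u k)) - u k ^ n"
      unfolding Q_def by (simp add: poly_sum poly_monom)
    also have "(\<Sum>i\<le>n. u i ^ n / d i * poly (L i) (u k)) = u k ^ n / d k * poly (L k) (u k)"
    proof -
      have z: "u i ^ n / d i * poly (L i) (u k) = 0" if "i \<in> {..n} - {k}" for i
      proof -
        have "k \<in> {..n} - {i}" using that \<open>k \<le> n\<close> by auto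
        hence "(\<Prod>j\<in>{..n}-{i}. u k - u j) = 0"
          by (intro prod_zero) auto
        thus ?thesis by (simp add: polyL)
      qed
      have "(\<Sum>i\<le>n. u i ^ n / d i * poly (L i) (u k)) = u k ^ n / d k * poly (L k) (u k) + (\<Sum>i\<in>{..n}-{k}. u i ^ n / d i * poly (L i) (u k))"
        by (subst sum.remove[of _ k]) (use that in auto)
      also have "(\<Sum>i\<in>{..n}-{k}. u i ^ n / d i * poly (L i) (u k)) = 0"
        using z by (intro sum.neutral) blast
      finally show ?thesis by simp
    qed
    also have "\<dots> = u k ^ n" using dnz[OF that] by (simp add: polyL d_def)
    finally show ?thesis by simp
  qed
  have degQ: "degree Q \<le> n"
  proof -
    have "degree (\<Sum>i\<le>n. Polynomial.smult (u i ^ n / d i) (L i)) \<le> n"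
    proof (rule degree_sum_le)
      fix i assume "i \<in> {..n}"
      thus "degree (Polynomial.smult (u i ^ n / d i) (L i)) \<le> n" using degL[of i] degree_smult_le[of _ "L i"] by auto
    qed simp
    moreover have "degree (monom (1::real) n) \<le> n" by (rule degree_monom_le)
    ultimately show ?thesis unfolding Q_def by (rule degree_diff_le)
  qed
  have Q0: "Q = 0"
  proof (rule ccontr)
    assume "Q \<noteq> 0"
    hence c1: "card {x. poly Q x = 0} \<le> n" using card_poly_roots_bound[of Q] degQ by linarith
    have sub: "u ` {..n} \<subseteq> {x. poly Q x = 0}" using roots by blast
    have inj: "inj_on u {..n}" unfolding inj_on_def using dist by blast
    have c2: "card (u ` {..n}) = n + 1" using card_image[OF inj] by simp
    have fin: "finite {x. poly Q x = 0}" using \<open>Q \<noteq> 0\<close> poly_roots_finite by blast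
    have "card (u ` {..n}) \<le> card {x. poly Q x = 0}" by (rule card_mono[OF fin sub])
    hence "n + 1 \<le> n" using c1 c2 by linarith
    thus False by simp
  qed
  have "coeff Q n = (\<Sum>i\<le>n. u i ^ n / d i * coeff (L i) n) - 1"
    unfolding Q_def by (simp add: coeff_sum)
  also have "(\<Sum>i\<le>n. u i ^ n / d i * coeff (L i) n) = (\<Sum>i\<le>n. u i ^ n / d i)"
    by (rule sum.cong) (use lcL degL in auto)
  finally show ?thesis using Q0 unfolding d_def by simp
qed


lemma weighted_identity:
  fixes w \<beta> :: "nat \<Rightarrow> real"
  assumes wpos: "\<forall>i\<le>n. w i > 0"
    and denom: "\<forall>i\<le>n. (\<Prod>j\<in>{..n}-{i}. \<beta> i / w i * w j - \<beta> j) \<noteq> 0"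
  shows "(\<Sum>i\<le>n. 1 / w i ^ (n+1) * (\<beta> i ^ n / (\<Prod>j\<in>{..n}-{i}. \<beta> i / w i * w j - \<beta> j)))
         = 1 / (\<Prod>i\<le>n. w i)"
proof -
  define u where "u i = \<beta> i / w i" for i
  define d where "d i = (\<Prod>j\<in>{..n}-{i}. u i - u j)" for i
  have fac: "\<beta> i / w i * w j - \<beta> j = w j * (u i - u j)" if "j \<le> n" for i j
    using wpos that unfolding u_def by (auto simp: field_simps)
  have P: "(\<Prod>j\<in>{..n}-{i}. \<beta> i / w i * w j - \<beta> j) = (\<Prod>j\<in>{..n}-{i}. w j) * d i" for i
  proof -
    have "(\<Prod>j\<in>{..n}-{i}. \<beta> i / w i * w j - \<beta> j) = (\<Prod>j\<in>{..n}-{i}. w j * (u i - u j))"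
      by (intro prod.cong refl fac) auto
    also have "\<dots> = (\<Prod>j\<in>{..n}-{i}. w j) * d i" unfolding d_def by (rule prod.distrib)
    finally show ?thesis .
  qed
  have dist: "u i \<noteq> u j" if "i \<le> n" "j \<le> n" "i \<noteq> j" for i j
  proof
    assume "u i = u j"
    hence "(\<Prod>j\<in>{..n}-{i}. \<beta> i / w i * w j - \<beta> j) = 0"
      using that fac[of j i] by (intro prod_zero) (auto intro!: bexI[of _ j])
    thus False using denom that by auto
  qed
  have W: "(\<Prod>i\<le>n. w i) = w i * (\<Prod>j\<in>{..n}-{i}. w j)" if "i \<le> n" for i
    using that by (subst prod.remove[of _ i]) auto
  have Wpos: "(\<Prod>i\<le>n. w i) > 0" using wpos by (intro prod_pos) auto
  have tm: "1 / w i ^ (n+1) * (\<beta> i ^ n / (\<Prod>j\<in>{..n}-{i}. \<beta> i / w i * w j - \<beta> j))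
      = (u i ^ n / d i) / (\<Prod>i\<le>n. w i)" if "i \<le> n" for i
  proof -
    have wi: "w i > 0" using wpos that by auto
    have "\<beta> i = u i * w i" using wi unfolding u_def by simp
    hence "\<beta> i ^ n = u i ^ n * w i ^ n" by (simp add: power_mult_distrib)
    thus ?thesis unfolding P W[OF that] using wi by (simp add: field_simps)
  qed
  have "(\<Sum>i\<le>n. 1 / w i ^ (n+1) * (\<beta> i ^ n / (\<Prod>j\<in>{..n}-{i}. \<beta> i / w i * w j - \<beta> j)))
      = (\<Sum>i\<le>n. (u i ^ n / d i) / (\<Prod>i\<le>n. w i))"
    by (intro sum.cong refl tm) auto
  also have "\<dots> = (\<Sum>i\<le>n. u i ^ n / d i) / (\<Prod>i\<le>n. w i)" by (simp add: sum_divide_distrib)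
  also have "(\<Sum>i\<le>n. u i ^ n / d i) = 1" unfolding d_def by (rule lagrange_top) (use dist in auto)
  finally show ?thesis by simp
qed



lemma det_nat_jnf: "Determinant.det (mat N N (\<lambda>(i,j). M i j)) = det_nat N M"
  unfolding Determinant.det_def det_nat_def by (simp add: lessThan_atLeast0)

lemma sum_pairs: "(\<Sum>k<2*n+2. h k) = (\<Sum>i\<le>(n::nat). h (2*i) + h (2*i+1))"
  by (induction n) (simp_all add: algebra_simps)

lemma mkvec_even[simp]: "mkvec a b (2*i) = a i"
  unfolding mkvec_def by simp
lemma mkvec_odd[simp]: "mkvec a b (Suc (2*i)) = b i"
  unfolding mkvec_def by simp

lemma xc_mkvec[simp]: "xc (mkvec a b) = a"
  unfolding xc_def mkvec_def by (simp add: fun_eq_iff)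
lemma yc_mkvec[simp]: "yc (mkvec a b) = b"
  unfolding yc_def mkvec_def by (simp add: fun_eq_iff)

definition Cw :: "(nat \<Rightarrow> real) \<Rightarrow> (nat \<Rightarrow> real) \<Rightarrow> nat \<Rightarrow> real" where
  "Cw w p = mkvec (\<lambda>i. w i * xc p i) (\<lambda>i. w i * yc p i)"

lemma rinner_pairs: "rinner n u v = (\<Sum>i\<le>n. u (2*i) * v (2*i) + u (Suc (2*i)) * v (Suc (2*i)))"
  unfolding rinner_def sum_pairs by simp

lemma Jst_even[simp]: "Jst v (2*i) = - v (Suc (2*i))"
  unfolding Jst_def yc_def by simp
lemma Jst_odd[simp]: "Jst v (Suc (2*i)) = v (2*i)"
  unfolding Jst_def xc_def by simp
lemma Cw_even[simp]: "Cw w p (2*i) = w i * p (2*i)"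
  unfolding Cw_def xc_def by simp
lemma Cw_odd[simp]: "Cw w p (Suc (2*i)) = w i * p (Suc (2*i))"
  unfolding Cw_def yc_def by simp

lemma F1: "eta0 n p v = rinner n (Jst p) v"
  unfolding eta0_def rinner_pairs by (intro sum.cong refl) (simp add: xc_def yc_def, (simp add: algebra_simps power2_eq_square)?)
lemma F2: "deta0 n u v = 2 * rinner n (Jst u) v"
  unfolding deta0_def rinner_pairs sum_distrib_left by (intro sum.cong refl) (simp add: xc_def yc_def, (simp add: algebra_simps power2_eq_square)?)
lemma F3: "dfw n w p v = 2 * rinner n (Cw w p) v"
  unfolding dfw_def rinner_pairs sum_distrib_left by (intro sum.cong refl) (simp add: xc_def yc_def, (simp add: algebra_simps power2_eq_square)?)
lemma F4: "fw n w p = rinner n (Cw w p) p"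
  unfolding fw_def rinner_pairs by (intro sum.cong refl) (simp add: xc_def yc_def, (simp add: algebra_simps power2_eq_square)?)
lemma F5: "reeb_w n w p = Jst (Cw w p)"
  unfolding reeb_w_def Jst_def Cw_def by (simp add: xc_def yc_def)

lemma F6: "rinner n (Jst u) (Jst v) = rinner n u v"
  unfolding rinner_pairs by (intro sum.cong refl) (simp add: xc_def yc_def, (simp add: algebra_simps power2_eq_square)?)
lemma F7: "rinner n (Jst u) v = - rinner n u (Jst v)"
  unfolding rinner_pairs sum_negf[symmetric] by (intro sum.cong refl) (simp add: xc_def yc_def, (simp add: algebra_simps power2_eq_square)?)
lemma F8: "rinner n (Jst p) (Cw w p) = 0"
  unfolding rinner_pairs by (intro sum.neutral ballI) (simp, (simp add: algebra_simps)?)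
lemma F9: "Jst (Jst u) = (\<lambda>k. - u k)"
  unfolding Jst_def mkvec_def xc_def yc_def by (auto simp: fun_eq_iff)
lemma Jst_lin: "Jst (\<lambda>k. a k + t * b k) = (\<lambda>k. Jst a k + t * Jst b k)"
  unfolding Jst_def mkvec_def xc_def yc_def by (auto simp: fun_eq_iff)
lemma Jst_lin': "Jst (\<lambda>k. a k - t * b k) = (\<lambda>k. Jst a k - t * Jst b k)"
  unfolding Jst_def mkvec_def xc_def yc_def by (auto simp: fun_eq_iff)

lemma R_sym: "rinner n u v = rinner n v u"
  unfolding rinner_def by (simp add: mult.commute)
lemma R_lin1: "rinner n (\<lambda>k. a k + t * b k) v = rinner n a v + t * rinner n b v"
  unfolding rinner_def by (simp add: algebra_simps sum.distrib sum_distrib_left)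
lemma R_lin1': "rinner n (\<lambda>k. a k - t * b k) v = rinner n a v - t * rinner n b v"
  unfolding rinner_def by (simp add: algebra_simps sum_subtractf sum_distrib_left)
lemma R_lin2: "rinner n v (\<lambda>k. a k + t * b k) = rinner n v a + t * rinner n v b"
  unfolding rinner_def by (simp add: algebra_simps sum.distrib sum_distrib_left)
lemma R_lin2': "rinner n v (\<lambda>k. a k - t * b k) = rinner n v a - t * rinner n v b"
  unfolding rinner_def by (simp add: algebra_simps sum_subtractf sum_distrib_left)
lemma R_Jself: "rinner n (Jst p) p = 0"
  unfolding rinner_pairs by (intro sum.neutral ballI) (simp, (simp add: algebra_simps)?)
lemma R_ebasis: "a < 2*n+2 \<Longrightarrow> rinner n (ebasis a) v = v a"
proof -
  assume a: "a < 2*n+2"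
  have "rinner n (ebasis a) v = (\<Sum>k<2*n+2. if a = k then v k else 0)"
    unfolding rinner_def ebasis_def by (intro sum.cong) auto
  also have "\<dots> = v a" using a by (simp add: sum.delta)
  finally show ?thesis .
qed

lemma R_ebasis2: "a < 2*n+2 \<Longrightarrow> rinner n v (ebasis a) = v a"
  using R_ebasis[of a n v] R_sym[of n v "ebasis a"] by simp

lemma Phi_eq: "Phi_w n w p v = (\<lambda>k. Jst v k + eta_w n w p v * Cw w p k)"
  unfolding Phi_w_def F5 Jst_lin' F9 by simp


lemma g_formula:
  assumes pv: "rinner n p v = 0" and f0: "fw n w p \<noteq> 0"
  shows "g_w n w p u v = (rinner n u v + rinner n (Jst p) v / fw n w p * rinner n (Jst u) (Cw w p)) / fw n w p
     + (rinner n (Cw w p) (Jst v) + rinner n (Jst p) v / fw n w p * rinner n (Cw w p) (Cw w p)) * rinner n (Jst p) u / (fw n w p)^2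
     + (rinner n (Jst p) u / fw n w p) * (rinner n (Jst p) v / fw n w p)"
proof -
  define f where "f = fw n w p"
  define E where "E = rinner n (Jst p) v / f"
  have phi: "Phi_w n w p v = (\<lambda>k. Jst v k + E * Cw w p k)"
    unfolding Phi_eq eta_w_def F1 E_def f_def ..
  have d1: "deta0 n u (Phi_w n w p v) = 2 * (rinner n u v + E * rinner n (Jst u) (Cw w p))"
    unfolding phi F2 R_lin2 F6 ..
  have e1: "eta0 n p (Phi_w n w p v) = 0"
    unfolding phi F1 R_lin2 F6 F8 using pv by simp
  have df1: "dfw n w p (Phi_w n w p v) = 2 * (rinner n (Cw w p) (Jst v) + E * rinner n (Cw w p) (Cw w p))"
    unfolding phi F3 R_lin2 ..
  have "g_w n w p u v = 1/2 * (2 * (rinner n u v + E * rinner n (Jst u) (Cw w p)) / f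
      - (2 * rinner n (Cw w p) u * 0 - 2 * (rinner n (Cw w p) (Jst v) + E * rinner n (Cw w p) (Cw w p)) * rinner n (Jst p) u) / f^2)
      + rinner n (Jst p) u / f * (rinner n (Jst p) v / f)"
    unfolding g_w_def deta_w_def d1 e1 df1 unfolding F3 F1 eta_w_def f_def ..
  also have "\<dots> = (rinner n u v + E * rinner n (Jst u) (Cw w p)) / f
      + (rinner n (Cw w p) (Jst v) + E * rinner n (Cw w p) (Cw w p)) * rinner n (Jst p) u / f^2
      + rinner n (Jst p) u / f * (rinner n (Jst p) v / f)"
    using f0 unfolding f_def by (simp add: field_simps)
  finally show ?thesis unfolding E_def f_def .
qed

lemma tproj_e: "a < 2*n+2 \<Longrightarrow> tproj n p (ebasis a) = (\<lambda>k. ebasis a k - p a * p k)"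
  unfolding tproj_def by (simp add: R_ebasis)

lemma entry_alg:
  fixes f d x y u v r s t :: real
  assumes "f \<noteq> 0"
  shows "((d - x) + u / f * (- s)) / f + ((- t) + u / f * r) * v / f^2 + (v / f) * (u / f) + x
     = (d - x) / f - (u * s + v * t) / f^2 + (r / f^3 + 1 / f^2) * v * u + x"
  using assms by (simp add: field_simps power2_eq_square power3_eq_cube)

lemma entry_formula:
  assumes p1: "rinner n p p = 1" and a: "a < 2*n+2" and b: "b < 2*n+2" and f0: "fw n w p \<noteq> 0"
  shows "g_w n w p (tproj n p (ebasis a)) (tproj n p (ebasis b)) + rinner n (ebasis a) p * rinner n (ebasis b) p
     = ((if a = b then 1 else 0) - p a * p b) / fw n w p
       - (Jst p b * Jst (Cw w p) a + Jst p a * Jst (Cw w p) b) / (fw n w p)^2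
       + (rinner n (Cw w p) (Cw w p) / (fw n w p)^3 + 1 / (fw n w p)^2) * Jst p a * Jst p b
       + p a * p b"
proof -
  define f where "f = fw n w p"
  define C where "C = Cw w p"
  define A where "A = Jst p"
  define B where "B = Jst C"
  have ta: "tproj n p (ebasis a) = (\<lambda>k. ebasis a k - p a * p k)" using tproj_e[OF a] .
  have tb: "tproj n p (ebasis b) = (\<lambda>k. ebasis b k - p b * p k)" using tproj_e[OF b] .
  have pb: "rinner n p (tproj n p (ebasis b)) = 0"
    unfolding tb R_lin2' using R_ebasis2[OF b] p1 by simp
  have Rab: "rinner n (tproj n p (ebasis a)) (tproj n p (ebasis b)) = (if a = b then 1 else 0) - p a * p b"
    unfolding ta tb R_lin1' R_lin2' using R_ebasis[OF a] R_ebasis2[OF b] p1 R_ebasis2[OF a]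
    by (simp add: ebasis_def)
  have RAa: "rinner n A (tproj n p (ebasis a)) = A a"
    unfolding ta R_lin2' A_def R_Jself using R_ebasis2[OF a] by simp
  have RAb: "rinner n A (tproj n p (ebasis b)) = A b"
    unfolding tb R_lin2' A_def R_Jself using R_ebasis2[OF b] by simp
  have RpB: "rinner n p B = 0" unfolding B_def C_def
    using F7[of n p "Cw w p"] F8[of n p w] by simp
  have RJa: "rinner n (Jst (tproj n p (ebasis a))) C = - B a"
  proof -
    have "rinner n (Jst (tproj n p (ebasis a))) C = rinner n (Jst (ebasis a)) C - p a * rinner n (Jst p) C"
      unfolding ta Jst_lin' R_lin1' ..
    also have "rinner n (Jst p) C = 0" unfolding C_def by (rule F8)
    also have "rinner n (Jst (ebasis a)) C = - rinner n (ebasis a) B" unfolding B_def by (rule F7)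
    finally show ?thesis using R_ebasis[OF a] by simp
  qed
  have RCJb: "rinner n C (Jst (tproj n p (ebasis b))) = - B b"
  proof -
    have "rinner n C (Jst (tproj n p (ebasis b))) = rinner n (Jst (tproj n p (ebasis b))) C" by (rule R_sym)
    also have "\<dots> = - B b"
    proof -
      have "rinner n (Jst (tproj n p (ebasis b))) C = rinner n (Jst (ebasis b)) C - p b * rinner n (Jst p) C"
        unfolding tb Jst_lin' R_lin1' ..
      also have "rinner n (Jst p) C = 0" unfolding C_def by (rule F8)
      also have "rinner n (Jst (ebasis b)) C = - rinner n (ebasis b) B" unfolding B_def by (rule F7)
      finally show ?thesis using R_ebasis[OF b] by simp
    qed
    finally show ?thesis .
  qed
  define dd :: real where "dd = (if a = b then 1 else 0)"
  have G: "g_w n w p (tproj n p (ebasis a)) (tproj n p (ebasis b))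
     = ((dd - p a * p b) + A b / f * (- B a)) / f
     + ((- B b) + A b / f * rinner n C C) * A a / f^2 + (A a / f) * (A b / f)"
    using g_formula[OF pb f0, of "tproj n p (ebasis a)"] Rab RAa RAb RJa RCJb
    unfolding A_def C_def f_def dd_def by simp
  have E: "rinner n (ebasis a) p * rinner n (ebasis b) p = p a * p b"
    using R_ebasis[OF a] R_ebasis[OF b] by simp
  have alg: "((dd - p a * p b) + A b / f * (- B a)) / f
     + ((- B b) + A b / f * rinner n C C) * A a / f^2 + (A a / f) * (A b / f) + p a * p b
     = (dd - p a * p b) / f - (A b * B a + A a * B b) / f^2
       + (rinner n C C / f^3 + 1 / f^2) * A a * A b + p a * p b"
    by (rule entry_alg) (use f0 f_def in simp)
  show ?thesis unfolding G E using alg unfolding dd_def A_def B_def C_def f_def by simp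
qed


lemma R_scale: "rinner n (\<lambda>k. c * a k) v = c * rinner n a v"
  unfolding rinner_def by (simp add: sum_distrib_left algebra_simps)
lemma sum_comb_gen: "(\<Sum>k\<in>S. (c * a k - b k / d) * v k) = c * (\<Sum>k\<in>S. a k * v k) - (\<Sum>k\<in>S. b k * v k) / (d::real)"
  by (simp add: sum_distrib_left sum_subtractf sum_divide_distrib algebra_simps)
lemma sum_negdiv_gen: "(\<Sum>k\<in>S. (- a k / d) * v k) = - (\<Sum>k\<in>S. a k * v k) / (d::real)"
  by (simp add: sum_negf sum_divide_distrib algebra_simps)
lemma R_comb: "rinner n (\<lambda>k. c * a k - b k / d) v = c * rinner n a v - rinner n b v / d"
  unfolding rinner_def by (rule sum_comb_gen)
lemma R_negdiv: "rinner n (\<lambda>k. - a k / d) v = - rinner n a v / d"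
  unfolding rinner_def by (rule sum_negdiv_gen)

lemma det3:
  fixes f al :: real
  assumes "f \<noteq> 0"
  shows "Determinant.det (mat 3 3 (\<lambda>(i,j). if i = 0 then (if j = 0 then f else 0)
      else if i = 1 then (if j = 0 then 0 else if j = 1 then al else 1)
      else (if j = 0 then 0 else if j = 1 then - 1 / f else 0))) = 1"
proof -
  define K2 :: "real mat" where "K2 = four_block_mat (mat 1 1 (\<lambda>_. al)) (mat 1 1 (\<lambda>_. 1)) (mat 1 1 (\<lambda>_. - 1 / f)) (mat 1 1 (\<lambda>_. 0))"
  have eq: "mat 3 3 (\<lambda>(i,j). if i = 0 then (if j = 0 then f else 0)
      else if i = 1 then (if j = 0 then 0 else if j = 1 then al else 1)
      else (if j = 0 then 0 else if j = 1 then - 1 / f else 0)) = four_block_mat (mat 1 1 (\<lambda>_. f)) (0\<^sub>m 1 2) (0\<^sub>m 2 1) K2"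
    unfolding K2_def
    by (rule eq_matI) (auto simp: less_Suc_eq numeral_3_eq_3 numeral_2_eq_2)
  have dK2: "Determinant.det K2 = 1 / f"
  proof -
    have "Determinant.det K2 = Determinant.det (mat 1 1 (\<lambda>_. al) * mat 1 1 (\<lambda>_. 0) - mat 1 1 (\<lambda>_. 1) * mat 1 1 (\<lambda>_. - 1 / f))"
      unfolding K2_def by (rule det_four_block_mat) (auto intro!: eq_matI simp: scalar_prod_def)
    also have "mat 1 1 (\<lambda>_. al) * mat 1 1 (\<lambda>_. 0) - mat 1 1 (\<lambda>_. 1) * mat 1 1 (\<lambda>_. - 1 / f) = mat 1 1 (\<lambda>_. 1 / f)"
      by (rule eq_matI) (auto simp: scalar_prod_def)
    also have "Determinant.det (mat 1 1 (\<lambda>_. 1 / f)) = 1 / f"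
      by (subst det_single) auto
    finally show ?thesis .
  qed
  show ?thesis unfolding eq
    by (subst det_four_block_mat_upper_right_zero[of _ 1 _ 2]) (use dK2 assms in \<open>auto simp: K2_def det_single\<close>)
qed

lemma sylvester_det:
  fixes U V :: "real mat"
  assumes U: "U \<in> carrier_mat N k" and V: "V \<in> carrier_mat k N"
  shows "Determinant.det (1\<^sub>m N + U * V) = Determinant.det (1\<^sub>m k + V * U)"
proof -
  have UV: "U * V \<in> carrier_mat N N" and VU: "V * U \<in> carrier_mat k k" using U V by auto
  define X where "X = four_block_mat (1\<^sub>m N + U * V) (- U) (0\<^sub>m k N) (1\<^sub>m k)"
  define Y where "Y = four_block_mat (1\<^sub>m N) (0\<^sub>m N k) V (1\<^sub>m k)"
  define W where "W = four_block_mat (1\<^sub>m N) (- U) (0\<^sub>m k N) (1\<^sub>m k + V * U)"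
  have e1: "(1\<^sub>m N + U * V) * 1\<^sub>m N + (- U) * V = 1\<^sub>m N"
  proof -
    have "(1\<^sub>m N + U * V) * 1\<^sub>m N = 1\<^sub>m N + U * V" by (rule right_mult_one_mat[of _ N]) (use UV in auto)
    moreover have "(- U) * V = - (U * V)" using U V by (intro uminus_mult_left_mat) auto
    moreover have "1\<^sub>m N + U * V + - (U * V) = 1\<^sub>m N + (U * V + - (U * V))"
      using UV by (intro assoc_add_mat) auto
    moreover have "U * V + - (U * V) = - (U * V) + U * V"
      using UV by (intro comm_add_mat) auto
    moreover have "- (U * V) + U * V = 0\<^sub>m N N" using UV by (intro uminus_l_inv_mat) auto
    ultimately show ?thesis by simp
  qed
  have e2: "V * (- U) + 1\<^sub>m k * (1\<^sub>m k + V * U) = 1\<^sub>m k"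
  proof -
    have "1\<^sub>m k * (1\<^sub>m k + V * U) = 1\<^sub>m k + V * U" by (rule left_mult_one_mat[of _ k k]) (use VU in auto)
    moreover have "V * (- U) = - (V * U)" using U V by (intro uminus_mult_right_mat) auto
    moreover have "- (V * U) + (1\<^sub>m k + V * U) = (1\<^sub>m k + V * U) + - (V * U)"
      using VU by (intro comm_add_mat) auto
    moreover have "1\<^sub>m k + V * U + - (V * U) = 1\<^sub>m k + (V * U + - (V * U))"
      using VU by (intro assoc_add_mat) auto
    moreover have "V * U + - (V * U) = - (V * U) + V * U"
      using VU by (intro comm_add_mat) auto
    moreover have "- (V * U) + V * U = 0\<^sub>m k k" using VU by (intro uminus_l_inv_mat) auto
    ultimately show ?thesis by simp
  qed
  have xy: "X * Y = four_block_mat (1\<^sub>m N) (- U) V (1\<^sub>m k)"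
    unfolding X_def Y_def
    apply (subst mult_four_block_mat[of _ N N _ k _ k _ _ N _ k])
    using U V UV VU e1 by auto
  have yw: "Y * W = four_block_mat (1\<^sub>m N) (- U) V (1\<^sub>m k)"
    unfolding W_def Y_def
    apply (subst mult_four_block_mat[of _ N N _ k _ k _ _ N _ k])
    using U V UV VU e2 by auto
  have "X * Y = Y * W" using xy yw by simp
  hence "Determinant.det X * Determinant.det Y = Determinant.det Y * Determinant.det W"
    using U V UV VU unfolding X_def Y_def W_def
    by (metis Determinant.det_mult four_block_carrier_mat one_carrier_mat add_carrier_mat)
  moreover have "Determinant.det Y = 1" unfolding Y_def
    using V by (subst det_four_block_mat_upper_right_zero[of _ N _ k]) auto
  moreover have "Determinant.det X = Determinant.det (1\<^sub>m N + U * V)" unfolding X_def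
    using U UV by (subst det_four_block_mat_lower_left_zero[of _ N _ k]) auto
  moreover have "Determinant.det W = Determinant.det (1\<^sub>m k + V * U)" unfolding W_def
    using U VU by (subst det_four_block_mat_lower_left_zero[of _ N _ k]) auto
  ultimately show ?thesis by simp
qed


lemma vol_density_sphere:
  assumes p1: "rinner n p p = 1" and fpos: "fw n w p > 0"
  shows "vol_density n w p = (1 / fw n w p) ^ (n + 1)"
proof -
  define N where "N = 2*n+2"
  define f where "f = fw n w p"
  define C where "C = Cw w p"
  define A where "A = Jst p"
  define B where "B = Jst C"
  define al where "al = rinner n C C / f^2 + 1 / f"
  have f0: "f \<noteq> 0" using fpos f_def by simp
  define v0 where "v0 = (\<lambda>b. (f - 1) * p b)"
  define v1 where "v1 = (\<lambda>b. al * A b - B b / f)"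
  define v2 where "v2 = (\<lambda>b. - A b / f)"
  define U :: "real mat" where "U = mat N 3 (\<lambda>(a,k). if k = 0 then p a else if k = 1 then A a else B a)"
  define V :: "real mat" where "V = mat 3 N (\<lambda>(k,b). if k = 0 then v0 b else if k = 1 then v1 b else v2 b)"
  define M where "M = (\<lambda>a b. g_w n w p (tproj n p (ebasis a)) (tproj n p (ebasis b)) + rinner n (ebasis a) p * rinner n (ebasis b) p)"
  have Mform: "mat N N (\<lambda>(i,j). M i j) = (1 / f) \<cdot>\<^sub>m (1\<^sub>m N + U * V)"
  proof (rule eq_matI)
    fix i j assume i: "i < dim_row ((1 / f) \<cdot>\<^sub>m (1\<^sub>m N + U * V))" and j: "j < dim_col ((1 / f) \<cdot>\<^sub>m (1\<^sub>m N + U * V))"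
    hence i': "i < N" and j': "j < N" unfolding U_def V_def by auto
    have uv: "(U * V) $$ (i, j) = p i * ((f - 1) * p j) + A i * (al * A j - B j / f) + B i * (- A j / f)"
      using i' j' unfolding U_def V_def v0_def v1_def v2_def
      by (simp add: scalar_prod_def numeral_3_eq_3 atLeast0LessThan lessThan_Suc)
    have "M i j = ((if i = j then 1 else 0) - p i * p j) / f
       - (A j * B i + A i * B j) / f^2 + (rinner n C C / f^3 + 1 / f^2) * A i * A j + p i * p j"
      unfolding M_def using entry_formula[OF p1, of i j w] i' j' f0
      unfolding N_def f_def A_def B_def C_def by simp
    also have "\<dots> = (1 / f) * ((if i = j then 1 else 0) + (p i * ((f - 1) * p j) + A i * (al * A j - B j / f) + B i * (- A j / f)))"
      unfolding al_def using f0 by (simp add: field_simps power2_eq_square power3_eq_cube)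
    finally show "mat N N (\<lambda>(i,j). M i j) $$ (i, j) = ((1 / f) \<cdot>\<^sub>m (1\<^sub>m N + U * V)) $$ (i, j)"
      using i' j' uv unfolding U_def V_def by simp
  qed (auto simp: U_def V_def)
  have U: "U \<in> carrier_mat N 3" and V: "V \<in> carrier_mat 3 N" unfolding U_def V_def by auto
  have Rpp: "rinner n p p = 1" by (rule p1)
  have RpA: "rinner n p A = 0" "rinner n A p = 0" unfolding A_def using R_Jself[of n p] R_sym[of n p "Jst p"] by auto
  have RpB: "rinner n p B = 0" "rinner n B p = 0" unfolding B_def C_def
    using F7[of n p "Cw w p"] F8[of n p w] R_sym[of n p "Jst (Cw w p)"] by auto
  have RAA: "rinner n A A = 1" unfolding A_def F6 by (rule p1)
  have RAB: "rinner n A B = f" "rinner n B A = f" unfolding A_def B_def F6 C_def f_def F4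
    using R_sym[of n p "Cw w p"] by auto
  have RBB: "rinner n B B = rinner n C C" unfolding B_def F6 ..
  have VU: "1\<^sub>m 3 + V * U = mat 3 3 (\<lambda>(i,j). if i = 0 then (if j = 0 then f else 0)
      else if i = 1 then (if j = 0 then 0 else if j = 1 then al else 1)
      else (if j = 0 then 0 else if j = 1 then - 1 / f else 0))"
  proof (rule eq_matI)
    fix i j assume "i < dim_row (mat 3 3 (\<lambda>(i,j). if i = 0 then (if j = 0 then f else 0)
      else if i = 1 then (if j = 0 then 0 else if j = 1 then al else 1)
      else (if j = 0 then 0 else if j = 1 then - 1 / f else (0::real))))"
      "j < dim_col (mat 3 3 (\<lambda>(i,j). if i = 0 then (if j = 0 then f else 0)
      else if i = 1 then (if j = 0 then 0 else if j = 1 then al else 1)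
      else (if j = 0 then 0 else if j = 1 then - 1 / f else (0::real))))"
    hence ij: "i < 3" "j < 3" by auto
    have vu: "(V * U) $$ (i, j) = rinner n (\<lambda>b. V $$ (i, b)) (\<lambda>a. U $$ (a, j))"
      using ij unfolding rinner_def N_def[symmetric] U_def V_def
      by (simp add: scalar_prod_def lessThan_atLeast0)
    have vu2: "rinner n (\<lambda>b. V $$ (i, b)) (\<lambda>a. U $$ (a, j)) =
       rinner n (if i = 0 then v0 else if i = 1 then v1 else v2)
                (if j = 0 then p else if j = 1 then A else B)"
      unfolding rinner_def N_def[symmetric] U_def V_def using ij by (intro sum.cong) auto
    have r0: "rinner n v0 p = f - 1" "rinner n v0 A = 0" "rinner n v0 B = 0"
      unfolding v0_def R_scale Rpp RpA RpB by simp_all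
    have r1: "rinner n v1 p = 0" "rinner n v1 A = al - 1" "rinner n v1 B = 1"
      unfolding v1_def R_comb Rpp RpA RpB RAA RAB RBB using f0 by (simp_all add: al_def field_simps power2_eq_square)
    have r2: "rinner n v2 p = 0" "rinner n v2 A = - 1 / f" "rinner n v2 B = - 1"
      unfolding v2_def R_negdiv Rpp RpA RpB RAA RAB RBB using f0 by simp_all
    have "i = 0 \<or> i = 1 \<or> i = 2" "j = 0 \<or> j = 1 \<or> j = 2" using ij by auto
    thus "(1\<^sub>m 3 + V * U) $$ (i, j) = mat 3 3 (\<lambda>(i,j). if i = 0 then (if j = 0 then f else 0)
      else if i = 1 then (if j = 0 then 0 else if j = 1 then al else 1)
      else (if j = 0 then 0 else if j = 1 then - 1 / f else 0)) $$ (i, j)"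
      using ij U V vu vu2 r0 r1 r2 by auto
  qed (use U V in auto)
  have "vol_density n w p = sqrt (Determinant.det (mat N N (\<lambda>(i,j). M i j)))"
    unfolding vol_density_def det_nat_jnf[symmetric] M_def N_def ..
  also have "Determinant.det (mat N N (\<lambda>(i,j). M i j)) = (1 / f) ^ N * Determinant.det (1\<^sub>m N + U * V)"
    unfolding Mform by (simp add: U_def V_def)
  also have "Determinant.det (1\<^sub>m N + U * V) = Determinant.det (1\<^sub>m 3 + V * U)"
    by (rule sylvester_det[OF U V])
  also have "\<dots> = 1" unfolding VU by (rule det3[OF f0])
  also have "(1 / f) ^ N * 1 = ((1 / f) ^ (n + 1))^2"
    unfolding N_def by (simp only: power_mult[symmetric] mult_1_right) (simp add: algebra_simps)
  finally show ?thesis using fpos unfolding f_def by simp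
qed



lemma restrict_upd_scale:
  assumes "i \<notin> I"
  shows "(\<lambda>k\<in>insert i I. c * (x(i := y)) k) = (\<lambda>k\<in>I. c * x k)(i := c * y)"
  using assms by (auto simp: fun_eq_iff restrict_def)

lemma scaling_PiM:
  fixes c :: real
  assumes "finite I" "c > 0"
  shows "H \<in> borel_measurable (Pi\<^sub>M I (\<lambda>_. lborel)) \<Longrightarrow>
    (\<integral>\<^sup>+x. H (\<lambda>k\<in>I. c * x k) \<partial>Pi\<^sub>M I (\<lambda>_. lborel)) = ennreal (inverse c ^ card I) * (\<integral>\<^sup>+x. H x \<partial>Pi\<^sub>M I (\<lambda>_. lborel))"
  using assms(1)
proof (induction I arbitrary: H rule: finite_induct)
  case empty
  have "(\<lambda>k\<in>{}. c * x k) = (\<lambda>_. undefined)" for x by auto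
  thus ?case by (simp add: PiM_empty nn_integral_count_space_finite)
next
  case (insert i I)
  interpret product_sigma_finite "\<lambda>_. lborel" by standard
  note Hm[measurable] = insert.prems
  define K where "K = (\<lambda>z. \<integral>\<^sup>+y. H (z(i := y)) \<partial>lborel)"
  have Km[measurable]: "K \<in> borel_measurable (Pi\<^sub>M I (\<lambda>_. lborel))"
    unfolding K_def using insert.hyps by measurable
  have inner: "(\<integral>\<^sup>+y. H (z(i := c * y)) \<partial>lborel) = ennreal (inverse c) * K z"
    if z: "z \<in> space (Pi\<^sub>M I (\<lambda>_. lborel))" for z
  proof -
    have fm: "(\<lambda>y. H (z(i := y))) \<in> borel_measurable borel"
      using measurable_comp[OF measurable_component_update[OF z \<open>i \<notin> I\<close>] Hm] by (simp add: comp_def)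
    have "K z = ennreal \<bar>c\<bar> * (\<integral>\<^sup>+y. H (z(i := 0 + c * y)) \<partial>lborel)"
      unfolding K_def by (rule nn_integral_real_affine[OF fm]) (use \<open>c > 0\<close> in simp)
    hence "ennreal (inverse c) * K z = ennreal (inverse c) * ennreal c * (\<integral>\<^sup>+y. H (z(i := c * y)) \<partial>lborel)"
      using \<open>c > 0\<close> by (simp add: mult.assoc)
    also have "ennreal (inverse c) * ennreal c = 1"
      using \<open>c > 0\<close> by (simp add: ennreal_mult[symmetric])
    finally show ?thesis by (simp only: mult_1_left)
  qed
  have zsp: "(\<lambda>k\<in>I. c * x k) \<in> space (Pi\<^sub>M I (\<lambda>_. lborel))" for x
    by (simp add: space_PiM)
  have "(\<integral>\<^sup>+x. H (\<lambda>k\<in>insert i I. c * x k) \<partial>Pi\<^sub>M (insert i I) (\<lambda>_. lborel))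
      = (\<integral>\<^sup>+x. (\<integral>\<^sup>+y. H (\<lambda>k\<in>insert i I. c * (x(i := y)) k) \<partial>lborel) \<partial>Pi\<^sub>M I (\<lambda>_. lborel))"
    by (rule product_nn_integral_insert) (use insert.hyps in \<open>auto\<close>)
  also have "\<dots> = (\<integral>\<^sup>+x. ennreal (inverse c) * K (\<lambda>k\<in>I. c * x k) \<partial>Pi\<^sub>M I (\<lambda>_. lborel))"
    by (rule nn_integral_cong) (simp only: restrict_upd_scale[OF insert.hyps(2)] inner[OF zsp])
  also have "\<dots> = ennreal (inverse c) * (\<integral>\<^sup>+x. K (\<lambda>k\<in>I. c * x k) \<partial>Pi\<^sub>M I (\<lambda>_. lborel))"
    by (rule nn_integral_cmult) measurable
  also have "\<dots> = ennreal (inverse c) * (ennreal (inverse c ^ card I) * (\<integral>\<^sup>+x. K x \<partial>Pi\<^sub>M I (\<lambda>_. lborel)))"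
    using insert.IH[OF Km] by (simp only:)
  also have "(\<integral>\<^sup>+x. K x \<partial>Pi\<^sub>M I (\<lambda>_. lborel)) = (\<integral>\<^sup>+x. H x \<partial>Pi\<^sub>M (insert i I) (\<lambda>_. lborel))"
    unfolding K_def by (rule product_nn_integral_insert[symmetric]) (use insert.hyps in \<open>auto\<close>)
  finally show ?case using insert.hyps \<open>c > 0\<close>
    by (simp add: ennreal_mult mult.assoc)
qed


lemma log_annulus:
  fixes a :: real assumes a: "a > 0"
  shows "(\<integral>\<^sup>+r. indicator {0<..} r * ennreal (1 / r) * indicator {r. 1 \<le> a / r \<and> a / r \<le> exp 1} r \<partial>lborel) = 1"
proof -
  have eq: "indicator {0<..} r * ennreal (1 / r) * indicator {r. 1 \<le> a / r \<and> a / r \<le> exp 1} r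
      = ennreal (1 / r) * indicator {a / exp 1 .. a} r" for r :: real
  proof (cases "r > 0")
    case True
    have "(1 \<le> a / r \<and> a / r \<le> exp 1) \<longleftrightarrow> r \<in> {a / exp 1 .. a}"
      using True a by (auto simp: field_simps)
    thus ?thesis using True by (auto simp: indicator_def)
  next
    case False
    have "r * exp 1 \<le> 0" using False by (simp add: mult_nonpos_nonneg)
    hence "r \<notin> {a / exp 1 .. a}" using a by (auto simp: field_simps)
    thus ?thesis using False by (auto simp: indicator_def)
  qed
  have "(\<integral>\<^sup>+r. ennreal (1 / r) * indicator {a / exp 1 .. a} r \<partial>lborel) = ennreal (ln a - ln (a / exp 1))"
  proof (rule nn_integral_FTC_Icc[where F = ln])
    have pos: "x > 0" if "x \<in> {a / exp 1 .. a}" for x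
    proof -
      have "a / exp 1 > 0" using a by simp
      thus ?thesis using that by auto
    qed
    show "DERIV ln x :> 1 / x" if "x \<in> {a / exp 1 .. a}" for x
      using pos[OF that] by (auto intro!: derivative_eq_intros)
    show "0 \<le> 1 / x" if "x \<in> {a / exp 1 .. a}" for x
      using pos[OF that] by simp
    show "a / exp 1 \<le> a" using a by (simp add: field_simps)
  qed simp
  also have "ln a - ln (a / exp 1) = 1" using a by (simp add: ln_div)
  finally show ?thesis unfolding eq by simp
qed

lemma polar:
  fixes F :: "(nat \<Rightarrow> real) \<Rightarrow> ennreal"
  assumes Fm: "F \<in> borel_measurable (Pi\<^sub>M {..<2*n+2} (\<lambda>_. lborel))"
  shows "(\<integral>\<^sup>+x. F x * indicator {x. 0 < rinner n x x} x \<partial>Pi\<^sub>M {..<2*n+2} (\<lambda>_. lborel))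
    = (\<integral>\<^sup>+y. indicator {y. 1 \<le> rinner n y y \<and> rinner n y y \<le> exp 1} y *
         (\<integral>\<^sup>+r. indicator {0<..} r * ennreal (r ^ n) * F (\<lambda>k\<in>{..<2*n+2}. sqrt r * y k) \<partial>lborel)
       \<partial>Pi\<^sub>M {..<2*n+2} (\<lambda>_. lborel))"
proof -
  define I where "I = {..<2*n+2}"
  define M where "M = Pi\<^sub>M I (\<lambda>_. lborel :: real measure)"
  interpret P: finite_product_sigma_finite "\<lambda>_. lborel" I by standard (auto simp: I_def)
  interpret PS: pair_sigma_finite M lborel
    unfolding M_def by (intro pair_sigma_finite.intro P.sigma_finite_measure_axioms lborel.sigma_finite_measure_axioms)
  have rm[measurable]: "(\<lambda>x. rinner n x x) \<in> borel_measurable M"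
    unfolding M_def rinner_def I_def by measurable
  note Fm' [measurable] = Fm[folded I_def, folded M_def]
  note Fm'' [measurable] = Fm[folded I_def]
  note Fm [measurable]
  define psi where "psi = (\<lambda>y. indicator {y. 1 \<le> rinner n y y \<and> rinner n y y \<le> exp 1} y :: ennreal)"
  define psr where "psr = (\<lambda>r x. indicator {x. 1 \<le> rinner n x x / r \<and> rinner n x x / r \<le> exp 1} x :: ennreal)"
  have psim[measurable]: "psi \<in> borel_measurable M" unfolding psi_def by measurable
  have nr_restr: "rinner n (\<lambda>k\<in>I. c * y k) (\<lambda>k\<in>I. c * y k) = c^2 * rinner n y y" for c y
    unfolding rinner_def I_def by (simp add: sum_distrib_left power2_eq_square algebra_simps)
  have step1: "(\<integral>\<^sup>+y. psi y * (\<integral>\<^sup>+r. indicator {0<..} r * ennreal (r ^ n) * F (\<lambda>k\<in>I. sqrt r * y k) \<partial>lborel) \<partial>M)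
     = (\<integral>\<^sup>+y. (\<integral>\<^sup>+r. psi y * (indicator {0<..} r * ennreal (r ^ n) * F (\<lambda>k\<in>I. sqrt r * y k)) \<partial>lborel) \<partial>M)"
  proof (rule nn_integral_cong)
    fix y assume y: "y \<in> space M"
    show "psi y * (\<integral>\<^sup>+r. indicator {0<..} r * ennreal (r ^ n) * F (\<lambda>k\<in>I. sqrt r * y k) \<partial>lborel)
      = (\<integral>\<^sup>+r. psi y * (indicator {0<..} r * ennreal (r ^ n) * F (\<lambda>k\<in>I. sqrt r * y k)) \<partial>lborel)"
      by (rule nn_integral_cmult[symmetric]) measurable
  qed
  have step2: "(\<integral>\<^sup>+y. (\<integral>\<^sup>+r. psi y * (indicator {0<..} r * ennreal (r ^ n) * F (\<lambda>k\<in>I. sqrt r * y k)) \<partial>lborel) \<partial>M)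
     = (\<integral>\<^sup>+r. (\<integral>\<^sup>+y. psi y * (indicator {0<..} r * ennreal (r ^ n) * F (\<lambda>k\<in>I. sqrt r * y k)) \<partial>M) \<partial>lborel)"
  proof -
    have m2: "(\<lambda>(y,r). psi y * (indicator {0<..} r * ennreal (r ^ n) * F (\<lambda>k\<in>I. sqrt r * y k))) \<in> borel_measurable (M \<Otimes>\<^sub>M lborel)"
      unfolding M_def psi_def rinner_def I_def by measurable
    show ?thesis using PS.Fubini'[OF m2] by simp
  qed
  have step3: "(\<integral>\<^sup>+y. psi y * (indicator {0<..} r * ennreal (r ^ n) * F (\<lambda>k\<in>I. sqrt r * y k)) \<partial>M)
     = (\<integral>\<^sup>+x. indicator {0<..} r * ennreal (1 / r) * (psr r x * F x) \<partial>M)" for r :: real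
  proof (cases "r > 0")
    case False
    thus ?thesis by simp
  next
    case True
    define G where "G = (\<lambda>x. psr r x * F x)"
    have Gm: "G \<in> borel_measurable M" unfolding G_def psr_def by measurable
    have Gm'[measurable]: "G \<in> borel_measurable (Pi\<^sub>M I (\<lambda>_. lborel))" using Gm unfolding M_def .
    have "(\<integral>\<^sup>+y. psi y * (indicator {0<..} r * ennreal (r ^ n) * F (\<lambda>k\<in>I. sqrt r * y k)) \<partial>M)
        = (\<integral>\<^sup>+y. ennreal (r ^ n) * G (\<lambda>k\<in>I. sqrt r * y k) \<partial>M)"
    proof (rule nn_integral_cong)
      fix y assume "y \<in> space M"
      have "psr r (\<lambda>k\<in>I. sqrt r * y k) = psi y"
        unfolding psr_def psi_def using True by (simp add: indicator_def nr_restr)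
      thus "psi y * (indicator {0<..} r * ennreal (r ^ n) * F (\<lambda>k\<in>I. sqrt r * y k)) = ennreal (r ^ n) * G (\<lambda>k\<in>I. sqrt r * y k)"
        using True unfolding G_def by (simp add: mult_ac)
    qed
    also have "\<dots> = ennreal (r ^ n) * (\<integral>\<^sup>+y. G (\<lambda>k\<in>I. sqrt r * y k) \<partial>M)"
      by (rule nn_integral_cmult) (unfold M_def, measurable)
    also have "(\<integral>\<^sup>+y. G (\<lambda>k\<in>I. sqrt r * y k) \<partial>M) = ennreal (inverse (sqrt r) ^ card I) * (\<integral>\<^sup>+x. G x \<partial>M)"
      unfolding M_def by (rule scaling_PiM) (use True Gm in \<open>auto simp: I_def M_def\<close>)
    also have "ennreal (r ^ n) * (ennreal (inverse (sqrt r) ^ card I) * (\<integral>\<^sup>+x. G x \<partial>M))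
       = ennreal (1 / r) * (\<integral>\<^sup>+x. G x \<partial>M)"
    proof -
      have cI: "card I = 2 * (n + 1)" by (simp add: I_def)
      have "inverse (sqrt r) ^ (2 * (n + 1)) = (inverse (sqrt r) ^ 2) ^ (n + 1)" by (rule power_mult)
      also have "inverse (sqrt r) ^ 2 = inverse r" using True by (simp add: power_inverse)
      finally have "inverse (sqrt r) ^ card I = inverse r ^ (n + 1)" unfolding cI .
      hence "r ^ n * inverse (sqrt r) ^ card I = 1 / r"
        using True by (simp add: field_simps)
      moreover have "ennreal (r ^ n) * ennreal (inverse (sqrt r) ^ card I) = ennreal (r ^ n * inverse (sqrt r) ^ card I)"
        by (rule ennreal_mult[symmetric]) (use True in auto)
      ultimately show ?thesis by (simp add: mult.assoc[symmetric])
    qed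
    also have "\<dots> = (\<integral>\<^sup>+x. ennreal (1 / r) * G x \<partial>M)"
      by (rule nn_integral_cmult[symmetric]) (rule Gm)
    finally show ?thesis using True unfolding G_def by (simp add: restrict_def)
  qed
  have step4: "(\<integral>\<^sup>+r. (\<integral>\<^sup>+x. indicator {0<..} r * ennreal (1 / r) * (psr r x * F x) \<partial>M) \<partial>lborel)
     = (\<integral>\<^sup>+x. (\<integral>\<^sup>+r. indicator {0<..} r * ennreal (1 / r) * (psr r x * F x) \<partial>lborel) \<partial>M)"
  proof -
    have m4: "(\<lambda>(x,r). indicator {0<..} r * ennreal (1 / r) * (psr r x * F x)) \<in> borel_measurable (M \<Otimes>\<^sub>M lborel)"
      unfolding M_def psr_def rinner_def I_def by measurable
    show ?thesis using PS.Fubini'[OF m4] by simp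
  qed
  have step5: "(\<integral>\<^sup>+r. indicator {0<..} r * ennreal (1 / r) * (psr r x * F x) \<partial>lborel) = F x * indicator {x. 0 < rinner n x x} x" for x
  proof -
    have "(\<integral>\<^sup>+r. indicator {0<..} r * ennreal (1 / r) * (psr r x * F x) \<partial>lborel)
        = (\<integral>\<^sup>+r. indicator {0<..} r * ennreal (1 / r) * psr r x \<partial>lborel) * F x"
      by (subst nn_integral_multc[symmetric]) (auto simp: psr_def mult_ac)
    also have "(\<integral>\<^sup>+r. indicator {0<..} r * ennreal (1 / r) * psr r x \<partial>lborel) = indicator {x. 0 < rinner n x x} x"
    proof (cases "0 < rinner n x x")
      case True
      thus ?thesis unfolding psr_def using log_annulus[OF True] by (simp add: indicator_def)
    next
      case False
      have z: "indicator {0<..} r * ennreal (1 / r) * psr r x = 0" for r :: real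
        using False unfolding psr_def by (auto simp: indicator_def divide_nonpos_pos)
      show ?thesis using False unfolding z by simp
    qed
    finally show ?thesis by (simp add: mult.commute)
  qed
  have "(\<integral>\<^sup>+y. psi y * (\<integral>\<^sup>+r. indicator {0<..} r * ennreal (r ^ n) * F (\<lambda>k\<in>I. sqrt r * y k) \<partial>lborel) \<partial>M)
      = (\<integral>\<^sup>+x. F x * indicator {x. 0 < rinner n x x} x \<partial>M)"
    unfolding step1 step2 step3 step4 step5 ..
  thus ?thesis unfolding psi_def M_def I_def by simp
qed



lemma sum_pairs': "(\<Sum>k<2*n+2. h k) = (\<Sum>i\<le>(n::nat). h (2*i) + h (2*i+1))"
  by (induction n) (simp_all add: algebra_simps)
lemma prod_pairs: "(\<Prod>k<2*n+2. h k) = (\<Prod>i\<le>(n::nat). h (2*i) * h (2*i+1))"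
  by (induction n) (simp_all add: algebra_simps)

lemma fw_alt: "fw n w y = (\<Sum>k<2*n+2. w (k div 2) * (y k)^2)"
  unfolding fw_def xc_def yc_def sum_pairs' by (simp add: algebra_simps)

lemma nr_alt: "rinner n y y = (\<Sum>k<2*n+2. (y k)^2)"
  unfolding rinner_def by (simp add: power2_eq_square)

lemma fw_nonneg: "\<forall>i\<le>n. w i > 0 \<Longrightarrow> fw n w y \<ge> 0"
  unfolding fw_def by (intro sum_nonneg) (auto intro!: mult_nonneg_nonneg)

lemma fw_pos:
  assumes wpos: "\<forall>i\<le>n. w i > 0" and nr: "rinner n y y > 0"
  shows "fw n w y > 0"
proof -
  obtain k where k: "k < 2*n+2" "y k \<noteq> 0"
  proof (rule ccontr)
    assume "\<not> thesis"
    hence "\<forall>k<2*n+2. y k = 0" using that by blast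
    hence "rinner n y y = 0" unfolding nr_alt by simp
    thus False using nr by simp
  qed
  have kd: "k div 2 \<le> n" using k by auto
  show ?thesis unfolding fw_alt
  proof (rule sum_pos2[where i=k])
    show "k \<in> {..<2*n+2}" using k by simp
    show "0 < w (k div 2) * (y k)^2" using wpos kd k by simp
    have w0: "\<And>i. i \<le> n \<Longrightarrow> 0 \<le> w i" using wpos by (simp add: less_imp_le)
    show "\<And>i. i \<in> {..<2*n+2} \<Longrightarrow> 0 \<le> w (i div 2) * (y i)^2"
      by (auto intro!: mult_nonneg_nonneg w0)
  qed simp
qed

lemma hom_nr: assumes "r \<ge> 0" shows "rinner n (\<lambda>k\<in>{..<2*n+2}. sqrt r * y k) (\<lambda>k\<in>{..<2*n+2}. sqrt r * y k) = r * rinner n y y"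
proof -
  have "(\<Sum>k<2*n+2. ((\<lambda>k\<in>{..<2*n+2}. sqrt r * y k) k)^2) = (\<Sum>k<2*n+2. r * (y k)^2)"
    by (intro sum.cong refl) (use assms in \<open>simp add: power_mult_distrib\<close>)
  thus ?thesis unfolding nr_alt by (simp only: sum_distrib_left)
qed

lemma hom_fw: assumes "r \<ge> 0" shows "fw n w (\<lambda>k\<in>{..<2*n+2}. sqrt r * y k) = r * fw n w y"
proof -
  have "(\<Sum>k<2*n+2. w (k div 2) * ((\<lambda>k\<in>{..<2*n+2}. sqrt r * y k) k)^2) = (\<Sum>k<2*n+2. r * (w (k div 2) * (y k)^2))"
    by (intro sum.cong refl) (use assms in \<open>simp add: power_mult_distrib\<close>)
  thus ?thesis unfolding fw_alt by (simp only: sum_distrib_left)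
qed

lemma gauss1:
  fixes a :: real assumes a: "a > 0"
  shows "(\<integral>\<^sup>+t. ennreal (exp (- (a * t^2))) \<partial>lborel) = ennreal (sqrt (pi / a))"
proof -
  define s where "s = 1 / sqrt (2 * a)"
  have spos: "s > 0" unfolding s_def using a by simp
  have s2: "s^2 = 1 / (2 * a)" unfolding s_def using a by (simp add: power_divide)
  have eq: "exp (- (a * t^2)) = sqrt (pi / a) * normal_density 0 s t" for t
  proof -
    have h1: "2 * pi * s^2 = pi / a" using s2 a by (simp add: field_simps)
    have h2: "- ((t - 0)^2) / (2 * s^2) = - (a * t^2)"
    proof -
      have "2 * s^2 = 1 / a" using s2 by simp
      thus ?thesis using a by simp
    qed
    show ?thesis unfolding normal_density_def h1 h2 using a by simp
  qed
  have "(\<integral>\<^sup>+t. ennreal (exp (- (a * t^2))) \<partial>lborel) = (\<integral>\<^sup>+t. ennreal (sqrt (pi / a)) * ennreal (normal_density 0 s t) \<partial>lborel)"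
  proof (rule nn_integral_cong)
    fix t :: real
    have pa: "0 \<le> sqrt (pi / a)" using a by simp
    show "ennreal (exp (- (a * t^2))) = ennreal (sqrt (pi / a)) * ennreal (normal_density 0 s t)"
      unfolding eq by (rule ennreal_mult[OF pa normal_density_nonneg])
  qed
  also have "\<dots> = ennreal (sqrt (pi / a)) * (\<integral>\<^sup>+t. ennreal (normal_density 0 s t) \<partial>lborel)"
    by (rule nn_integral_cmult) measurable
  also have "(\<integral>\<^sup>+t. ennreal (normal_density 0 s t) \<partial>lborel) = ennreal (\<integral>t. normal_density 0 s t \<partial>lborel)"
    by (rule nn_integral_eq_integral) (use spos in auto)
  finally show ?thesis using spos by simp
qed

lemma gauss_N:
  assumes wpos: "\<forall>i\<le>n. w i > 0"
  shows "(\<integral>\<^sup>+x. ennreal (exp (- fw n w x)) \<partial>Pi\<^sub>M {..<2*n+2} (\<lambda>_. lborel)) = ennreal (pi^(n+1) / (\<Prod>i\<le>n. w i))"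
proof -
  interpret product_sigma_finite "\<lambda>_. lborel" by standard
  have "(\<integral>\<^sup>+x. ennreal (exp (- fw n w x)) \<partial>Pi\<^sub>M {..<2*n+2} (\<lambda>_. lborel))
      = (\<integral>\<^sup>+x. (\<Prod>k\<in>{..<2*n+2}. ennreal (exp (- (w (k div 2) * (x k)^2)))) \<partial>Pi\<^sub>M {..<2*n+2} (\<lambda>_. lborel))"
  proof (rule nn_integral_cong)
    fix x
    have e: "exp (- fw n w x) = (\<Prod>k\<in>{..<2*n+2}. exp (- (w (k div 2) * (x k)^2)))"
      unfolding fw_alt sum_negf[symmetric] by (simp only: exp_sum[OF finite_lessThan])
    have p: "(\<Prod>k\<in>{..<2*n+2}. ennreal (exp (- (w (k div 2) * (x k)^2)))) = ennreal (\<Prod>k\<in>{..<2*n+2}. exp (- (w (k div 2) * (x k)^2)))"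
      by (rule prod_ennreal) simp
    show "ennreal (exp (- fw n w x)) = (\<Prod>k\<in>{..<2*n+2}. ennreal (exp (- (w (k div 2) * (x k)^2))))"
      unfolding e p ..
  qed
  also have "\<dots> = (\<Prod>k\<in>{..<2*n+2}. (\<integral>\<^sup>+t. ennreal (exp (- (w (k div 2) * t^2))) \<partial>lborel))"
    by (rule product_nn_integral_prod) auto
  also have "\<dots> = (\<Prod>k\<in>{..<2*n+2}. ennreal (sqrt (pi / w (k div 2))))"
    by (rule prod.cong) (use wpos in \<open>auto intro!: gauss1\<close>)
  also have "\<dots> = ennreal (\<Prod>k\<in>{..<2*n+2}. sqrt (pi / w (k div 2)))"
  proof (rule prod_ennreal)
    fix k assume "k \<in> {..<2*n+2}"
    hence "k div 2 \<le> n" by auto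
    thus "0 \<le> sqrt (pi / w (k div 2))" using wpos by (auto intro!: divide_nonneg_pos)
  qed
  also have "(\<Prod>k\<in>{..<2*n+2}. sqrt (pi / w (k div 2))) = (\<Prod>i\<le>n. pi / w i)"
    unfolding prod_pairs using wpos by (intro prod.cong) auto
  also have "\<dots> = pi^(n+1) / (\<Prod>i\<le>n. w i)"
    by (simp add: prod_dividef)
  finally show ?thesis .
qed

lemma L2:
  fixes b :: real assumes b: "b > 0"
  shows "(\<integral>\<^sup>+r. indicator {0<..} r * ennreal (r ^ n) * indicator {r. r * b \<le> 1} r \<partial>lborel) = ennreal ((1 / b)^(n+1) / (n+1))"
proof -
  have "(\<integral>\<^sup>+r. indicator {0<..} r * ennreal (r ^ n) * indicator {r. r * b \<le> 1} r \<partial>lborel)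
      = (\<integral>\<^sup>+r. ennreal (r ^ n) * indicator {0 .. 1 / b} r \<partial>lborel)"
  proof (rule nn_integral_cong_AE)
    show "AE r in lborel. indicator {0<..} r * ennreal (r ^ n) * indicator {r. r * b \<le> 1} r = ennreal (r ^ n) * indicator {0 .. 1 / b} r"
      using AE_lborel_singleton[of 0]
    proof (rule AE_mp, intro AE_I2 impI)
      fix r :: real assume "r \<noteq> 0"
      thus "indicator {0<..} r * ennreal (r ^ n) * indicator {r. r * b \<le> 1} r = ennreal (r ^ n) * indicator {0 .. 1 / b} r"
        using b by (auto simp: indicator_def field_simps)
    qed
  qed
  also have "\<dots> = ennreal ((1 / b)^(n+1) / (n+1) - 0^(n+1) / (n+1))"
  proof (rule nn_integral_FTC_Icc[where F = "\<lambda>r. r^(n+1) / (n+1)"])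
    fix x :: real
    have "DERIV (\<lambda>r. r^(n+1)) x :> real (n+1) * x ^ (n + 1 - Suc 0)" by (rule DERIV_pow)
    hence "DERIV (\<lambda>r. r^(n+1) / real (n+1)) x :> real (n+1) * x ^ (n + 1 - Suc 0) / real (n+1)"
      by (rule DERIV_cdivide)
    thus "DERIV (\<lambda>r. r^(n+1) / real (n+1)) x :> x ^ n" by simp
  next
    fix x :: real assume "x \<in> {0 .. 1/b}"
    thus "0 \<le> x ^ n" by simp
  qed (use b in auto)
  finally show ?thesis by simp
qed

lemma L3:
  fixes c :: real assumes c: "c > 0"
  shows "(\<integral>\<^sup>+r. indicator {0<..} r * ennreal (r ^ n) * ennreal (exp (- (r * c))) \<partial>lborel) = ennreal (fact n / c^(n+1))"
proof -
  define J where "J = (\<integral>\<^sup>+x. ennreal (x^n * exp (- (x * c))) * indicator {0..} x \<partial>lborel)"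
  have fm: "(\<lambda>x. ennreal (x^n * exp (-x)) * indicator {0..} x) \<in> borel_measurable borel" by measurable
  have "ennreal (fact n) = (\<integral>\<^sup>+x. ennreal (x^n * exp (-x)) * indicator {0..} x \<partial>lborel)"
    using nn_intergal_power_times_exp_Ici[of n] by simp
  also have "\<dots> = ennreal \<bar>c\<bar> * (\<integral>\<^sup>+x. ennreal ((0 + c * x)^n * exp (- (0 + c * x))) * indicator {0..} (0 + c * x) \<partial>lborel)"
    by (rule nn_integral_real_affine[OF fm]) (use c in simp)
  also have "(\<integral>\<^sup>+x. ennreal ((0 + c * x)^n * exp (- (0 + c * x))) * indicator {0..} (0 + c * x) \<partial>lborel)
      = (\<integral>\<^sup>+x. ennreal (c^n) * (ennreal (x^n * exp (- (x * c))) * indicator {0..} x) \<partial>lborel)"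
  proof (rule nn_integral_cong)
    fix x :: real
    have "indicator {0..} (c * x) = (indicator {0..} x :: ennreal)"
      using c by (auto simp: indicator_def zero_le_mult_iff)
    thus "ennreal ((0 + c * x)^n * exp (- (0 + c * x))) * indicator {0..} (0 + c * x) = ennreal (c^n) * (ennreal (x^n * exp (- (x * c))) * indicator {0..} x)"
      using c by (cases "x \<ge> 0") (simp_all add: power_mult_distrib ennreal_mult mult.commute mult.left_commute)
  qed
  also have "\<dots> = ennreal (c^n) * J" unfolding J_def
    by (rule nn_integral_cmult) measurable
  finally have eq: "ennreal (fact n) = ennreal (c^(n+1)) * J"
    using c by (simp add: ennreal_mult mult.assoc)
  have "J = ennreal (1 / c^(n+1)) * (ennreal (c^(n+1)) * J)"
    using c by (simp add: ennreal_mult[symmetric] mult.assoc[symmetric])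
  also have "\<dots> = ennreal (fact n / c^(n+1))" unfolding eq[symmetric]
    using c by (simp add: ennreal_mult[symmetric])
  finally have J: "J = ennreal (fact n / c^(n+1))" .
  have "(\<integral>\<^sup>+r. indicator {0<..} r * ennreal (r ^ n) * ennreal (exp (- (r * c))) \<partial>lborel) = J"
    unfolding J_def
  proof (rule nn_integral_cong_AE)
    show "AE r in lborel. indicator {0<..} r * ennreal (r ^ n) * ennreal (exp (- (r * c))) = ennreal (r^n * exp (- (r * c))) * indicator {0..} r"
      using AE_lborel_singleton[of 0]
    proof (rule AE_mp, intro AE_I2 impI)
      fix r :: real assume "r \<noteq> 0"
      thus "indicator {0<..} r * ennreal (r ^ n) * ennreal (exp (- (r * c))) = ennreal (r^n * exp (- (r * c))) * indicator {0..} r"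
        by (cases "r > 0") (auto simp: indicator_def ennreal_mult)
    qed
  qed
  thus ?thesis using J by simp
qed



lemma nr_nonneg: "rinner n x x \<ge> 0"
  unfolding nr_alt by (intro sum_nonneg) simp

lemma AE_nr_pos: "AE x in Pi\<^sub>M {..<2*n+2} (\<lambda>_. lborel :: real measure). 0 < rinner n x x"
proof (rule AE_I)
  interpret product_sigma_finite "\<lambda>_. lborel :: real measure" by standard
  define N where "N = (\<Pi>\<^sub>E k\<in>{..<2*n+2}. ({0} :: real set))"
  show "{x \<in> space (Pi\<^sub>M {..<2*n+2} (\<lambda>_. lborel)). \<not> 0 < rinner n x x} \<subseteq> N"
  proof
    fix x assume x: "x \<in> {x \<in> space (Pi\<^sub>M {..<2*n+2} (\<lambda>_. lborel)). \<not> 0 < rinner n x x}"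
    hence "rinner n x x = 0" using nr_nonneg[of n x] by auto
    hence "(\<Sum>k<2*n+2. (x k)^2) = 0" unfolding nr_alt .
    hence "\<forall>k\<in>{..<2*n+2}. (x k)^2 = 0" by (subst (asm) sum_nonneg_eq_0_iff) auto
    moreover have "x \<in> extensional {..<2*n+2}" using x by (auto simp: space_PiM PiE_def)
    ultimately show "x \<in> N" unfolding N_def PiE_iff by simp
  qed
  show "N \<in> sets (Pi\<^sub>M {..<2*n+2} (\<lambda>_. lborel))" unfolding N_def by (rule sets_PiM_I_finite) auto
  show "emeasure (Pi\<^sub>M {..<2*n+2} (\<lambda>_. lborel)) N = 0" unfolding N_def
    by (subst emeasure_PiM) auto
qed

lemma aux_pow:
  fixes a c :: real assumes a: "a > 0" and c: "c > 0"
  shows "(a / c)^(n+1) * ((1 / a)^(n+1) / real (n+1)) = 1 / real (n+1) * (1 / c ^ (n+1))"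
proof -
  have "(a / c) * (1 / a) = 1 / c" using a by simp
  hence h: "(a / c)^(n+1) * (1 / a)^(n+1) = (1 / c)^(n+1)" by (metis power_mult_distrib)
  have "(a / c)^(n+1) * ((1 / a)^(n+1) / real (n+1)) = ((a / c)^(n+1) * (1 / a)^(n+1)) / real (n+1)"
    by (rule times_divide_eq_right)
  also have "\<dots> = (1 / c)^(n+1) / real (n+1)" unfolding h ..
  also have "\<dots> = 1 / real (n+1) * (1 / c ^ (n+1))" by (simp add: power_one_over)
  finally show ?thesis .
qed

lemma ball_integral:
  assumes wpos: "\<forall>i\<le>n. w i > 0"
  shows "(\<integral>\<^sup>+x. ennreal (indicator {x. rinner n x x \<le> 1} x * (rinner n x x / fw n w x)^(n+1)) \<partial>Pi\<^sub>M {..<2*n+2} (\<lambda>_. lborel))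
     = ennreal (pi^(n+1) / (fact (n+1) * (\<Prod>i\<le>n. w i)))"
proof -
  define M where "M = Pi\<^sub>M {..<2*n+2} (\<lambda>_. lborel :: real measure)"
  define F1 where "F1 = (\<lambda>x. ennreal (indicator {x. rinner n x x \<le> 1} x * (rinner n x x / fw n w x)^(n+1)))"
  define F2 where "F2 = (\<lambda>x. ennreal (exp (- fw n w x)))"
  define psi where "psi = (\<lambda>y. indicator {y. 1 \<le> rinner n y y \<and> rinner n y y \<le> exp 1} y :: ennreal)"
  define Q where "Q = (\<integral>\<^sup>+y. psi y * ennreal (1 / fw n w y ^ (n+1)) \<partial>M)"
  have F1m: "F1 \<in> borel_measurable (Pi\<^sub>M {..<2*n+2} (\<lambda>_. lborel))"
    unfolding F1_def rinner_def fw_def xc_def yc_def by measurable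
  have F2m: "F2 \<in> borel_measurable (Pi\<^sub>M {..<2*n+2} (\<lambda>_. lborel))"
    unfolding F2_def fw_def xc_def yc_def by measurable
  have zr: "(\<lambda>k\<in>{..<2*n+2}. sqrt r * y k) = (\<lambda>k\<in>{..<2*n+2}. sqrt r * y k)" for r y ..
  have a1: "(\<integral>\<^sup>+x. F1 x \<partial>M) = (\<integral>\<^sup>+x. F1 x * indicator {x. 0 < rinner n x x} x \<partial>M)"
  proof (rule nn_integral_cong)
    fix x
    show "F1 x = F1 x * indicator {x. 0 < rinner n x x} x"
    proof (cases "0 < rinner n x x")
      case False
      hence "rinner n x x = 0" using nr_nonneg[of n x] by simp
      thus ?thesis unfolding F1_def by simp
    qed simp
  qed
  have R1: "psi y * (\<integral>\<^sup>+r. indicator {0<..} r * ennreal (r ^ n) * F1 (\<lambda>k\<in>{..<2*n+2}. sqrt r * y k) \<partial>lborel)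
      = ennreal (1 / (n+1)) * (psi y * ennreal (1 / fw n w y ^ (n+1)))" for y
  proof (cases "1 \<le> rinner n y y \<and> rinner n y y \<le> exp 1")
    case False thus ?thesis unfolding psi_def by simp
  next
    case True
    define a where "a = rinner n y y"
    define c where "c = fw n w y"
    have a: "a > 0" using True a_def by simp
    have c: "c > 0" unfolding c_def using fw_pos[OF wpos] a a_def by simp
    have "(\<integral>\<^sup>+r. indicator {0<..} r * ennreal (r ^ n) * F1 (\<lambda>k\<in>{..<2*n+2}. sqrt r * y k) \<partial>lborel)
        = (\<integral>\<^sup>+r. ennreal ((a / c)^(n+1)) * (indicator {0<..} r * ennreal (r ^ n) * indicator {r. r * a \<le> 1} r) \<partial>lborel)"
    proof (rule nn_integral_cong)
      fix r :: real
      show "indicator {0<..} r * ennreal (r ^ n) * F1 (\<lambda>k\<in>{..<2*n+2}. sqrt r * y k)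
          = ennreal ((a / c)^(n+1)) * (indicator {0<..} r * ennreal (r ^ n) * indicator {r. r * a \<le> 1} r)"
      proof (cases "r > 0")
        case True
        have h1: "rinner n (\<lambda>k\<in>{..<2*n+2}. sqrt r * y k) (\<lambda>k\<in>{..<2*n+2}. sqrt r * y k) = r * a"
          unfolding a_def by (rule hom_nr) (use True in simp)
        have h2: "fw n w (\<lambda>k\<in>{..<2*n+2}. sqrt r * y k) = r * c"
          unfolding c_def by (rule hom_fw) (use True in simp)
        have "F1 (\<lambda>k\<in>{..<2*n+2}. sqrt r * y k) = ennreal (of_bool (r * a \<le> 1) * (r * a / (r * c))^(n+1))"
          unfolding F1_def indicator_def mem_Collect_eq h1 h2 ..
        also have "\<dots> = ennreal (indicator {r. r * a \<le> 1} r * (a / c)^(n+1))"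
          using True by (simp add: indicator_def)
        finally have "F1 (\<lambda>k\<in>{..<2*n+2}. sqrt r * y k) = ennreal (indicator {r. r * a \<le> 1} r * (a / c)^(n+1))" .
        thus ?thesis using True a c by (simp add: indicator_def ennreal_mult mult_ac)
      qed simp
    qed
    also have "\<dots> = ennreal ((a / c)^(n+1)) * ennreal ((1 / a)^(n+1) / (n+1))"
      by (subst nn_integral_cmult) (simp_all add: L2[OF a])
    also have "\<dots> = ennreal ((a / c)^(n+1) * ((1 / a)^(n+1) / (n+1)))"
      by (rule ennreal_mult[symmetric]) (use a c in auto)
    also have "\<dots> = ennreal (1 / (n+1) * (1 / c ^ (n+1)))" by (simp only: aux_pow[OF a c])
    also have "\<dots> = ennreal (1 / (n+1)) * ennreal (1 / c ^ (n+1))"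
      by (rule ennreal_mult) (use c in auto)
    finally show ?thesis using True unfolding psi_def c_def by (simp add: mult_ac)
  qed
  have b1: "(\<integral>\<^sup>+x. F1 x \<partial>M) = ennreal (1 / (n+1)) * Q"
  proof -
    have "(\<integral>\<^sup>+x. F1 x \<partial>M) = (\<integral>\<^sup>+y. psi y * (\<integral>\<^sup>+r. indicator {0<..} r * ennreal (r ^ n) * F1 (\<lambda>k\<in>{..<2*n+2}. sqrt r * y k) \<partial>lborel) \<partial>M)"
      unfolding a1 unfolding M_def psi_def by (rule polar[OF F1m])
    also have "\<dots> = (\<integral>\<^sup>+y. ennreal (1 / (n+1)) * (psi y * ennreal (1 / fw n w y ^ (n+1))) \<partial>M)"
      unfolding R1 ..
    also have "\<dots> = ennreal (1 / (n+1)) * Q" unfolding Q_def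
      by (rule nn_integral_cmult) (unfold M_def psi_def rinner_def fw_def xc_def yc_def, measurable)
    finally show ?thesis .
  qed
  have a2: "(\<integral>\<^sup>+x. F2 x \<partial>M) = (\<integral>\<^sup>+x. F2 x * indicator {x. 0 < rinner n x x} x \<partial>M)"
    by (rule nn_integral_cong_AE) (use AE_nr_pos[of n] in \<open>unfold M_def, auto elim!: eventually_mono\<close>)
  have R2: "psi y * (\<integral>\<^sup>+r. indicator {0<..} r * ennreal (r ^ n) * F2 (\<lambda>k\<in>{..<2*n+2}. sqrt r * y k) \<partial>lborel)
      = ennreal (fact n) * (psi y * ennreal (1 / fw n w y ^ (n+1)))" for y
  proof (cases "1 \<le> rinner n y y \<and> rinner n y y \<le> exp 1")
    case False thus ?thesis unfolding psi_def by simp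
  next
    case True
    define c where "c = fw n w y"
    have c: "c > 0" unfolding c_def using fw_pos[OF wpos] True by simp
    have "(\<integral>\<^sup>+r. indicator {0<..} r * ennreal (r ^ n) * F2 (\<lambda>k\<in>{..<2*n+2}. sqrt r * y k) \<partial>lborel)
        = (\<integral>\<^sup>+r. indicator {0<..} r * ennreal (r ^ n) * ennreal (exp (- (r * c))) \<partial>lborel)"
    proof (rule nn_integral_cong)
      fix r :: real
      show "indicator {0<..} r * ennreal (r ^ n) * F2 (\<lambda>k\<in>{..<2*n+2}. sqrt r * y k)
          = indicator {0<..} r * ennreal (r ^ n) * ennreal (exp (- (r * c)))"
      proof (cases "r > 0")
        case True
        have h2: "fw n w (\<lambda>k\<in>{..<2*n+2}. sqrt r * y k) = r * c"
          unfolding c_def by (rule hom_fw) (use True in simp)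
        show ?thesis unfolding F2_def h2 ..
      qed simp
    qed
    also have "\<dots> = ennreal (fact n / c^(n+1))" by (rule L3[OF c])
    also have "\<dots> = ennreal (fact n) * ennreal (1 / c ^ (n+1))"
      using c by (simp add: ennreal_mult[symmetric])
    finally show ?thesis using True unfolding psi_def c_def by (simp add: mult_ac)
  qed
  have b2: "(\<integral>\<^sup>+x. F2 x \<partial>M) = ennreal (fact n) * Q"
  proof -
    have "(\<integral>\<^sup>+x. F2 x \<partial>M) = (\<integral>\<^sup>+y. psi y * (\<integral>\<^sup>+r. indicator {0<..} r * ennreal (r ^ n) * F2 (\<lambda>k\<in>{..<2*n+2}. sqrt r * y k) \<partial>lborel) \<partial>M)"
      unfolding a2 unfolding M_def psi_def by (rule polar[OF F2m])
    also have "\<dots> = (\<integral>\<^sup>+y. ennreal (fact n) * (psi y * ennreal (1 / fw n w y ^ (n+1))) \<partial>M)"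
      unfolding R2 ..
    also have "\<dots> = ennreal (fact n) * Q" unfolding Q_def
      by (rule nn_integral_cmult) (unfold M_def psi_def rinner_def fw_def xc_def yc_def, measurable)
    finally show ?thesis .
  qed
  have g: "(\<integral>\<^sup>+x. F2 x \<partial>M) = ennreal (pi^(n+1) / (\<Prod>i\<le>n. w i))"
    unfolding F2_def M_def by (rule gauss_N[OF wpos])
  have Wpos: "(\<Prod>i\<le>n. w i) > 0" using wpos by (intro prod_pos) auto
  have Qv: "Q = ennreal (pi^(n+1) / (\<Prod>i\<le>n. w i) / fact n)"
  proof -
    have "Q = ennreal (1 / fact n) * (ennreal (fact n) * Q)"
      by (simp add: ennreal_mult[symmetric] mult.assoc[symmetric])
    also have "\<dots> = ennreal (1 / fact n) * ennreal (pi^(n+1) / (\<Prod>i\<le>n. w i))" using b2 g by simp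
    also have "\<dots> = ennreal (pi^(n+1) / (\<Prod>i\<le>n. w i) / fact n)"
      using Wpos by (simp add: ennreal_mult[symmetric])
    finally show ?thesis .
  qed
  have "(\<integral>\<^sup>+x. F1 x \<partial>M) = ennreal (1 / (n+1)) * ennreal (pi^(n+1) / (\<Prod>i\<le>n. w i) / fact n)"
    using b1 Qv by simp
  also have "\<dots> = ennreal (pi^(n+1) / (fact (n+1) * (\<Prod>i\<le>n. w i)))"
    using Wpos by (simp add: ennreal_mult[symmetric] field_simps)
  finally show ?thesis unfolding F1_def M_def .
qed


lemma vd0: "vol_density n w (\<lambda>k. 0) = 0"
proof -
  have f0: "fw n w (\<lambda>k. 0) = 0" unfolding fw_def xc_def yc_def by simp
  have g0: "g_w n w (\<lambda>k. 0) u v = 0" for u v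
    unfolding g_w_def deta_w_def eta_w_def f0 by simp
  have r0: "rinner n u (\<lambda>k. 0) = 0" for u unfolding rinner_def by simp
  have "det_nat (2*n+2) (\<lambda>a b. 0) = 0" unfolding det_nat_def by simp
  thus ?thesis unfolding vol_density_def g0 r0 by simp
qed

lemma integrand_eq:
  assumes wpos: "\<forall>i\<le>n. w i > 0"
  shows "indicator {x. rinner n x x \<le> 1} x * vol_density n w (\<lambda>k. x k / sqrt (rinner n x x))
       = indicator {x. rinner n x x \<le> 1} x * (rinner n x x / fw n w x)^(n+1)"
proof (cases "rinner n x x > 0")
  case False
  hence z: "rinner n x x = 0" using nr_nonneg[of n x] by simp
  have "(\<lambda>k. x k / sqrt (rinner n x x)) = (\<lambda>k. 0)" unfolding z by simp
  thus ?thesis unfolding z by (simp add: vd0)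
next
  case True
  define s where "s = sqrt (rinner n x x)"
  define p where "p = (\<lambda>k. x k / s)"
  have s2: "s^2 = rinner n x x" unfolding s_def using True by simp
  have sp: "s > 0" unfolding s_def using True by simp
  have p1: "rinner n p p = 1"
  proof -
    have "rinner n p p = (\<Sum>k<2*n+2. x k * x k / s^2)"
      unfolding rinner_def p_def by (intro sum.cong refl) (simp add: power2_eq_square)
    also have "\<dots> = (\<Sum>k<2*n+2. x k * x k) / s^2" by (rule sum_divide_distrib[symmetric])
    also have "\<dots> = 1" using s2 True unfolding rinner_def by simp
    finally show ?thesis .
  qed
  have fwp: "fw n w p = fw n w x / rinner n x x"
  proof -
    have "fw n w p = (\<Sum>k<2*n+2. w (k div 2) * (x k)^2 / s^2)"
      unfolding fw_alt p_def by (intro sum.cong refl) (simp add: power_divide)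
    also have "\<dots> = (\<Sum>k<2*n+2. w (k div 2) * (x k)^2) / s^2" by (rule sum_divide_distrib[symmetric])
    finally have "fw n w p = (\<Sum>k<2*n+2. w (k div 2) * (x k)^2) / s^2" .
    thus ?thesis unfolding fw_alt s2 .
  qed
  have fx: "fw n w x > 0" by (rule fw_pos[OF wpos True])
  have fpos: "fw n w p > 0" unfolding fwp using fx True by simp
  have "vol_density n w p = (1 / fw n w p)^(n+1)" by (rule vol_density_sphere[OF p1 fpos])
  also have "\<dots> = (rinner n x x / fw n w x)^(n+1)" unfolding fwp by simp
  finally show ?thesis unfolding p_def s_def by simp
qed

theorem corollary6p1:
  fixes n :: nat and w \<beta> :: "nat \<Rightarrow> real"
  assumes wpos: "\<forall>i\<le>n. w i > 0"
    and generic: "\<forall>p\<in>unit_sphere n. closed_reeb_orbit n w p \<longrightarrow>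
                    (\<exists>i\<le>n. (xc p i)\<^sup>2 + (yc p i)\<^sup>2 = 1)"
    and denom: "\<forall>i\<le>n. (\<Prod>j\<in>{..n}-{i}. \<beta> i / w i * w j - \<beta> j) \<noteq> 0"
  shows "deformed_volume n w =
           2 * pi ^ (n+1) / fact n *
             (\<Sum>i\<le>n. 1 / w i ^ (n+1) * (\<beta> i ^ n / (\<Prod>j\<in>{..n}-{i}. \<beta> i / w i * w j - \<beta> j)))
       \<and> 2 * pi ^ (n+1) / fact n *
             (\<Sum>i\<le>n. 1 / w i ^ (n+1) * (\<beta> i ^ n / (\<Prod>j\<in>{..n}-{i}. \<beta> i / w i * w j - \<beta> j)))
         = 2 * pi ^ (n+1) / fact n * (1 / (\<Prod>i\<le>n. w i))"
proof -
  define g where "g = (\<lambda>x. indicator {x. rinner n x x \<le> 1} x * (rinner n x x / fw n w x)^(n+1) :: real)"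
  have Wpos: "(\<Prod>i\<le>n. w i) > 0" using wpos by (intro prod_pos) auto
  have gm: "g \<in> borel_measurable (Pi\<^sub>M {..<2*n+2} (\<lambda>_. lborel))"
    unfolding g_def rinner_def fw_def xc_def yc_def by measurable
  have gnn: "0 \<le> g x" for x
    unfolding g_def using nr_nonneg[of n x] fw_nonneg[OF wpos, of x] by (simp add: indicator_def)
  have "(\<integral>x. indicator {x. rinner n x x \<le> 1} x * vol_density n w (\<lambda>k. x k / sqrt (rinner n x x)) \<partial>Pi\<^sub>M {..<2*n+2} (\<lambda>_. lborel))
      = (\<integral>x. g x \<partial>Pi\<^sub>M {..<2*n+2} (\<lambda>_. lborel))"
    unfolding g_def by (simp only: integrand_eq[OF wpos])
  also have "\<dots> = enn2real (\<integral>\<^sup>+x. ennreal (g x) \<partial>Pi\<^sub>M {..<2*n+2} (\<lambda>_. lborel))"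
    by (rule integral_eq_nn_integral[OF gm]) (simp add: gnn)
  also have "(\<integral>\<^sup>+x. ennreal (g x) \<partial>Pi\<^sub>M {..<2*n+2} (\<lambda>_. lborel)) = ennreal (pi^(n+1) / (fact (n+1) * (\<Prod>i\<le>n. w i)))"
    unfolding g_def by (rule ball_integral[OF wpos])
  also have "enn2real (ennreal (pi^(n+1) / (fact (n+1) * (\<Prod>i\<le>n. w i)))) = pi^(n+1) / (fact (n+1) * (\<Prod>i\<le>n. w i))"
    using Wpos by simp
  finally have I: "(\<integral>x. indicator {x. rinner n x x \<le> 1} x * vol_density n w (\<lambda>k. x k / sqrt (rinner n x x)) \<partial>Pi\<^sub>M {..<2*n+2} (\<lambda>_. lborel))
      = pi^(n+1) / (fact (n+1) * (\<Prod>i\<le>n. w i))" .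
  have vol: "deformed_volume n w = 2 * pi ^ (n+1) / fact n * (1 / (\<Prod>i\<le>n. w i))"
  proof -
    have "deformed_volume n w = real (2*n+2) * (pi^(n+1) / (fact (n+1) * (\<Prod>i\<le>n. w i)))"
      unfolding deformed_volume_def sphere_integral_def I ..
    also have "\<dots> = 2 * pi ^ (n+1) / fact n * (1 / (\<Prod>i\<le>n. w i))"
    proof -
      have f1: "(fact (n+1)::real) = real (n+1) * fact n" by simp
      have f2: "real (2*n+2) = 2 * real (n+1)" by simp
      have fn: "(fact n :: real) > 0" by simp
      have f3: "real (n+1) > 0" by simp
      have "real (2*n+2) * (pi^(n+1) / (fact (n+1) * (\<Prod>i\<le>n. w i)))
          = (real (n+1) * (2 * pi^(n+1))) / (real (n+1) * (fact n * (\<Prod>i\<le>n. w i)))"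
      proof -
        have e1: "real (2*n+2) * pi^(n+1) = real (n+1) * (2 * pi^(n+1))" unfolding f2 by simp
        have e2: "(fact (n+1)::real) * (\<Prod>i\<le>n. w i) = real (n+1) * (fact n * (\<Prod>i\<le>n. w i))" unfolding f1 by simp
        show ?thesis unfolding times_divide_eq_right e1 e2 ..
      qed
      also have "\<dots> = (2 * pi^(n+1)) / (fact n * (\<Prod>i\<le>n. w i))"
        by (rule mult_divide_mult_cancel_left) (use f3 in simp)
      finally show ?thesis by simp
    qed
    finally show ?thesis .
  qed
  have alg: "(\<Sum>i\<le>n. 1 / w i ^ (n+1) * (\<beta> i ^ n / (\<Prod>j\<in>{..n}-{i}. \<beta> i / w i * w j - \<beta> j)))
         = 1 / (\<Prod>i\<le>n. w i)"
    by (rule weighted_identity[OF wpos denom])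
  show ?thesis unfolding vol alg by simp
qed

end
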